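(* Fix $\Gamma z_0\in\mathcal M$. Let $x\in[0,1)$ be irrational with Diophantine exponent $\kappa_x>1$, and let $\{y_n\}_{n\in\mathbb N}$ be positive numbers with $y_n\asymp n^{-\beta}$ for some fixed $2<\beta<2\kappa_x$. Then $$\limsup_{n\to\infty}\frac{\inf_{\Gamma z\in\mathcal R_n(x,y_n)}d_{\mathcal M}(\Gamma z_0,\Gamma z)}{\log n}\ge\min\{2\kappa_x-\beta,\ \beta-2\}.$$
   Context: For $\kappa>0$, $x$ is primitive $n^{-\kappa}$-approximable if there are infinitely many $n\in\mathbb N$ such that some $m\in\mathbb Z$ with $\gcd(m,n)=1$ satisfies $|x-\tfrac mn|<n^{-\kappa-1}$; the Diophantine exponent $\kappa_x$ of an irrational $x$ is the supremum of $\kappa'>0$ for which $x$ is primitive $n^{-\kappa'}$-approximable. $\Gamma=\mathrm{SL}_2(\mathbb Z)$, $\mathcal M=\Gamma\backslash\mathbb H$, $d_{\mathcal M}(\Gamma z_1,\Gamma z_2)=\inf_{\gamma\in\Gamma}d_{\mathbb H}(\gamma z_1,z_2)$ with $d_{\mathbb H}$ the hyperbolic distance. $\mathcal R_n(x,y)=\{\Gamma(x+\tfrac jn+iy):0\le j\le n-1\}$. *)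

theory Defs
  imports "HOL-Analysis.Analysis"
begin

definition upper_half_plane :: "complex set" where
  "upper_half_plane = {z. Im z > 0}"

definition dist_H :: "complex \<Rightarrow> complex \<Rightarrow> real" where
  "dist_H z w = arcosh (1 + (cmod (z - w))^2 / (2 * Im z * Im w))"

definition SL2Z :: "(int \<times> int \<times> int \<times> int) set" where
  "SL2Z = {(a, b, c, d). a * d - b * c = 1}"

fun moebius :: "int \<times> int \<times> int \<times> int \<Rightarrow> complex \<Rightarrow> complex" where
  "moebius (a, b, c, d) z = (of_int a * z + of_int b) / (of_int c * z + of_int d)"

text \<open>Distance on the modular surface, computed on representatives:
  d_M(Gamma z1, Gamma z2) = inf over gamma of d_H(gamma z1, z2).\<close>
definition dist_M :: "complex \<Rightarrow> complex \<Rightarrow> real" where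
  "dist_M z1 z2 = (INF g \<in> SL2Z. dist_H (moebius g z1) z2)"

definition R_reps :: "nat \<Rightarrow> real \<Rightarrow> real \<Rightarrow> complex set" where
  "R_reps n x y = {Complex (x + real j / real n) y | j. j \<le> n - 1}"

definition min_dist_R :: "complex \<Rightarrow> nat \<Rightarrow> real \<Rightarrow> real \<Rightarrow> real" where
  "min_dist_R z0 n x y = (INF z \<in> R_reps n x y. dist_M z0 z)"

definition primitive_approximable :: "real \<Rightarrow> real \<Rightarrow> bool" where
  "primitive_approximable \<kappa> x \<longleftrightarrow>
     infinite {n :: nat. \<exists>m :: int. coprime m (int n) \<and>
                  \<bar>x - real_of_int m / real n\<bar> < real n powr (- \<kappa> - 1)}"

definition dioph_exponent :: "real \<Rightarrow> ereal" where
  "dioph_exponent x = Sup (ereal ` {\<kappa>. \<kappa> > 0 \<and> primitive_approximable \<kappa> x})"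

end

theory Submission
  imports Defs
begin


lemma denom_nz:
  assumes "a*d - b*c = 1" "Im w > 0"
  shows "of_int c * w + of_int d \<noteq> 0"
proof
  assume h: "of_int c * w + of_int d = 0"
  hence "Im (of_int c * w + of_int d) = 0" by simp
  hence "c = 0" using assms(2) by simp
  with h have "d = 0" by simp
  with \<open>c = 0\<close> assms(1) show False by simp
qed

lemma Im_moebius:
  assumes "a*d - b*c = 1" "Im w > 0"
  shows "Im (moebius (a,b,c,d) w) = Im w / (cmod (of_int c * w + of_int d))^2"
proof -
  have "Im (moebius (a,b,c,d) w) = (of_int (a*d - b*c) * Im w) / (cmod (of_int c * w + of_int d))^2"
    by (simp add: Im_divide' algebra_simps)
  thus ?thesis using assms by simp
qed

lemma moebius_diff:
  assumes "a*d - b*c = 1" "Im u > 0" "Im v > 0"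
  shows "moebius (a,b,c,d) u - moebius (a,b,c,d) v = (u - v) / ((of_int c * u + of_int d) * (of_int c * v + of_int d))"
proof -
  have nu: "of_int c * u + of_int d \<noteq> 0" and nv: "of_int c * v + of_int d \<noteq> 0"
    using denom_nz assms by blast+
  have "(of_int a * u + of_int b) * (of_int c * v + of_int d) - (of_int a * v + of_int b) * (of_int c * u + of_int d)
     = of_int (a*d - b*c) * (u - v)" by (simp add: algebra_simps)
  hence "(of_int a * u + of_int b) * (of_int c * v + of_int d) - (of_int a * v + of_int b) * (of_int c * u + of_int d)
     = (u - v)" using assms(1) by simp
  thus ?thesis using nu nv by (simp add: field_simps)
qed

lemma dist_H_invariant_ratio:
  assumes "a*d - b*c = 1" "Im u > 0" "Im v > 0"
  shows "(cmod (u - v))^2 / (2 * Im u * Im v) =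
    (cmod (moebius (a,b,c,d) u - moebius (a,b,c,d) v))^2 / (2 * Im (moebius (a,b,c,d) u) * Im (moebius (a,b,c,d) v))"
proof -
  have nu: "of_int c * u + of_int d \<noteq> 0" and nv: "of_int c * v + of_int d \<noteq> 0"
    using denom_nz assms by blast+
  define A where "A = cmod (of_int c * u + of_int d)"
  define B where "B = cmod (of_int c * v + of_int d)"
  have A: "A > 0" using nu A_def by simp
  have B: "B > 0" using nv B_def by simp
  define Mu where "Mu = moebius (a,b,c,d) u"
  define Mv where "Mv = moebius (a,b,c,d) v"
  have 1: "cmod (Mu - Mv) = cmod (u - v) / (A * B)"
    using moebius_diff[OF assms] unfolding Mu_def Mv_def by (simp add: A_def B_def norm_divide norm_mult)
  have 2: "Im Mu = Im u / A^2" using Im_moebius assms A_def Mu_def by blast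
  have 3: "Im Mv = Im v / B^2" using Im_moebius assms B_def Mv_def by blast
  have "(cmod (u - v))^2 / (2 * Im u * Im v) = (cmod (Mu - Mv))^2 / (2 * Im Mu * Im Mv)"
    unfolding 1 2 3 using A B assms by (simp add: field_simps power2_eq_square)
  thus ?thesis unfolding Mu_def Mv_def .
qed

lemma arcosh_ge_ln:
  fixes t :: real assumes "t \<ge> 1" shows "arcosh t \<ge> ln t"
proof -
  have "arcosh t = ln (t + sqrt (t^2 - 1))" using arcosh_real_def assms by blast
  moreover have "ln t \<le> ln (t + sqrt (t^2 - 1))" using assms by (subst ln_le_cancel_iff) (auto intro: add_pos_nonneg)
  ultimately show ?thesis by simp
qed

lemma dist_H_lower:
  assumes "g \<in> SL2Z" "Im u > 0" "Im v > 0"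
  shows "dist_H u v \<ge> ln (Im (moebius g v)) - ln (Im (moebius g u)) - ln 2"
proof -
  obtain a b c d where g: "g = (a,b,c,d)" and det: "a*d - b*c = 1" using assms(1) unfolding SL2Z_def by auto
  define U where "U = moebius g u"
  define V where "V = moebius g v"
  have UI: "Im U > 0" unfolding U_def g using Im_moebius[OF det assms(2)] denom_nz[OF det assms(2)] assms(2) by simp
  have VI: "Im V > 0" unfolding V_def g using Im_moebius[OF det assms(3)] denom_nz[OF det assms(3)] assms(3) by simp
  have eq: "dist_H u v = arcosh (1 + (cmod (U - V))^2 / (2 * Im U * Im V))"
    unfolding dist_H_def U_def V_def g using dist_H_invariant_ratio[OF det assms(2,3)] by simp
  have "\<bar>Im U - Im V\<bar> \<le> cmod (U - V)" using abs_Im_le_cmod[of "U - V"] by simp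
  hence sq: "(Im U - Im V)^2 \<le> (cmod (U - V))^2"
    by (metis abs_ge_zero power2_abs power_mono)
  have "Im V / (2 * Im U) \<le> 1 + (Im U - Im V)^2 / (2 * Im U * Im V)"
    using UI VI by (simp add: field_simps power2_eq_square)
  also have "\<dots> \<le> 1 + (cmod (U - V))^2 / (2 * Im U * Im V)"
    using sq UI VI by (simp add: divide_right_mono)
  finally have t1: "Im V / (2 * Im U) \<le> 1 + (cmod (U - V))^2 / (2 * Im U * Im V)" .
  have t2: "1 \<le> 1 + (cmod (U - V))^2 / (2 * Im U * Im V)" using UI VI by simp
  have "ln (Im V / (2 * Im U)) \<le> ln (1 + (cmod (U - V))^2 / (2 * Im U * Im V))"
    using t1 UI VI by (intro ln_mono) auto
  also have "\<dots> \<le> dist_H u v" using eq arcosh_ge_ln[OF t2] by simp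
  finally show ?thesis using UI VI by (simp add: ln_div ln_mult U_def V_def)
qed

lemma int_sq_ge1:
  fixes d :: int assumes "d \<noteq> 0" shows "(of_int d :: real)^2 \<ge> 1"
proof -
  have "1 \<le> \<bar>d\<bar>" using assms by simp
  hence "1 \<le> \<bar>d\<bar> * \<bar>d\<bar>" using mult_mono[of 1 "\<bar>d\<bar>" 1 "\<bar>d\<bar>"] by simp
  hence "1 \<le> d^2" by (simp add: power2_eq_square abs_mult_self_eq)
  hence "(1::real) \<le> of_int (d^2)" by (simp only: of_int_1_le_iff)
  thus ?thesis by simp
qed

lemma cmod_lattice_lower:
  fixes c d :: int
  assumes "Im z > 0" "c \<noteq> 0 \<or> d \<noteq> 0"
  shows "(cmod (of_int c * z + of_int d))^2 \<ge> min 1 ((Im z)^2)"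
proof -
  have e: "(cmod (of_int c * z + of_int d))^2 = (of_int c * Re z + of_int d)^2 + (of_int c * Im z)^2"
    by (simp add: cmod_power2)
  show ?thesis
  proof (cases "c = 0")
    case True
    then have "d \<noteq> 0" using assms by simp
    hence "(of_int d :: real)^2 \<ge> 1" by (rule int_sq_ge1)
    thus ?thesis using e True by simp
  next
    case False
    hence "(of_int c :: real)^2 \<ge> 1" by (rule int_sq_ge1)
    hence "(of_int c * Im z)^2 \<ge> (Im z)^2"
      by (simp add: power_mult_distrib mult_le_cancel_right1)
    thus ?thesis using e by (smt (verit) zero_le_power2)
  qed
qed

lemma orbit_height_bound:
  assumes "g \<in> SL2Z" "h \<in> SL2Z" "Im z > 0"
  shows "Im (moebius g (moebius h z)) \<le> Im z / min 1 ((Im z)^2)"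
proof -
  obtain a b c d where g: "g = (a,b,c,d)" and dg: "a*d - b*c = 1" using assms(1) unfolding SL2Z_def by auto
  obtain a' b' c' d' where h: "h = (a',b',c',d')" and dh: "a'*d' - b'*c' = 1" using assms(2) unfolding SL2Z_def by auto
  define w where "w = moebius h z"
  have n1: "of_int c' * z + of_int d' \<noteq> 0" using denom_nz[OF dh assms(3)] .
  have Iw: "Im w = Im z / (cmod (of_int c' * z + of_int d'))^2" using Im_moebius[OF dh assms(3)] h w_def by simp
  have Iwp: "Im w > 0" using Iw n1 assms(3) by simp
  have n2: "of_int c * w + of_int d \<noteq> 0" using denom_nz[OF dg Iwp] .
  have Igw: "Im (moebius g w) = Im w / (cmod (of_int c * w + of_int d))^2" using Im_moebius[OF dg Iwp] g by simp
  define C where "C = c*a' + d*c'"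
  define D where "D = c*b' + d*d'"
  have prod: "(of_int c * w + of_int d) * (of_int c' * z + of_int d') = of_int C * z + of_int D"
    using n1 unfolding w_def h C_def D_def by (simp add: field_simps)
  have CD: "C \<noteq> 0 \<or> D \<noteq> 0"
  proof (rule ccontr)
    assume "\<not> ?thesis"
    hence "C = 0" "D = 0" by auto
    hence "c * (a'*d' - b'*c') = 0" "d * (a'*d' - b'*c') = 0" unfolding C_def D_def by algebra+
    with dh dg show False by simp
  qed
  have "Im (moebius g w) = Im z / (cmod (of_int C * z + of_int D))^2"
    unfolding Igw Iw prod[symmetric] by (simp add: norm_mult power_mult_distrib divide_divide_eq_left mult.commute)
  also have "\<dots> \<le> Im z / min 1 ((Im z)^2)"
  proof -
    have m: "min 1 ((Im z)^2) > 0" using assms(3) by simp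
    have l: "min 1 ((Im z)^2) \<le> (cmod (of_int C * z + of_int D))^2" using cmod_lattice_lower[OF assms(3) CD] .
    have p: "(cmod (of_int C * z + of_int D))^2 > 0" using order_less_le_trans[OF m l] .
    show ?thesis
      using l assms(3) by (intro divide_left_mono) (use m p in auto)
  qed
  finally show ?thesis unfolding w_def .
qed

lemma cusp_height:
  fixes q :: nat and p :: int and j :: nat and x y :: real
  assumes q: "q \<ge> 1" and y: "y > 0"
  shows "\<exists>g\<in>SL2Z. Im (moebius g (Complex (x + real j / real q) y))
            \<ge> y / ((real q)^2 * ((x - real_of_int p / real q)^2 + y^2))"
proof -
  define P where "P = p + int j"
  define G where "G = gcd P (int q)"
  have G0: "G \<noteq> 0" using q unfolding G_def by simp
  have Gp: "G > 0" using G0 unfolding G_def by (metis gcd_ge_0_int order_le_neq_trans)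
  obtain a c where Pa: "P = a * G" and qc: "int q = c * G" and cop: "coprime a c"
    using gcd_coprime_exists[OF G0[unfolded G_def]] unfolding G_def by blast
  have cpos: "c > 0" using qc Gp q by (smt (verit) zero_less_mult_iff of_nat_le_iff of_nat_1)
  have cle: "c \<le> int q" using qc Gp cpos by (smt (verit) mult_le_cancel_left1)
  obtain u v where uv: "u * a + v * c = 1"
    using bezout_int[of a c] cop by (metis coprime_iff_gcd_eq_1)
  define g where "g = (-u, -v, c, -a)"
  have det: "(-u) * (-a) - (-v) * c = 1" using uv by (simp add: algebra_simps)
  have gS: "g \<in> SL2Z" unfolding g_def SL2Z_def using det by simp
  define z where "z = Complex (x + real j / real q) y"
  have Iz: "Im z > 0" using y z_def by simp
  have Im_eq: "Im (moebius g z) = Im z / (cmod (of_int c * z + of_int (-a)))^2"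
    unfolding g_def using Im_moebius[OF det Iz] .
  have qpos: "real q > 0" using q by simp
  have aq: "real_of_int a * real q = real_of_int P * real_of_int c"
  proof -
    have "a * int q = P * c" using Pa qc by (simp add: algebra_simps)
    hence "real_of_int (a * int q) = real_of_int (P * c)" by simp
    thus ?thesis by simp
  qed
  have re: "real_of_int c * (x + real j / real q) - real_of_int a = real_of_int c * (x - real_of_int p / real q)"
  proof -
    have "real_of_int a = real_of_int P * real_of_int c / real q" using aq qpos by (simp add: field_simps)
    thus ?thesis unfolding P_def using qpos by (simp add: field_simps)
  qed
  have cm: "(cmod (of_int c * z + of_int (-a)))^2 = (real_of_int c)^2 * ((x - real_of_int p / real q)^2 + y^2)"
  proof -
    have "(cmod (of_int c * z + of_int (-a)))^2 = (real_of_int c * (x + real j / real q) - real_of_int a)^2 + (real_of_int c * y)^2"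
      unfolding z_def by (simp add: cmod_power2)
    thus ?thesis unfolding re by (simp only: power_mult_distrib distrib_left)
  qed
  have c2: "(real_of_int c)^2 \<le> (real q)^2"
  proof -
    have "real_of_int c \<le> real q" using cle by simp
    moreover have "0 \<le> real_of_int c" using cpos by simp
    ultimately show ?thesis by (simp add: power_mono)
  qed
  have cp2: "(real_of_int c)^2 > 0" using cpos by simp
  have s: "(x - real_of_int p / real q)^2 + y^2 > 0" using y by (simp add: add_nonneg_pos)
  have "y / ((real q)^2 * ((x - real_of_int p / real q)^2 + y^2)) \<le> y / ((real_of_int c)^2 * ((x - real_of_int p / real q)^2 + y^2))"
    using c2 cp2 s y q by (intro divide_left_mono mult_right_mono mult_pos_pos) auto
  also have "\<dots> = Im (moebius g z)" unfolding Im_eq cm using z_def by simp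
  finally show ?thesis using gS z_def by blast
qed

lemma Im_moebius_pos:
  assumes "g \<in> SL2Z" "Im w > 0"
  shows "Im (moebius g w) > 0"
proof -
  obtain a b c d where g: "g = (a,b,c,d)" and det: "a*d - b*c = 1" using assms(1) unfolding SL2Z_def by auto
  show ?thesis unfolding g using Im_moebius[OF det assms(2)] denom_nz[OF det assms(2)] assms(2) by simp
qed

lemma min_dist_lower:
  fixes q :: nat and p :: int and x y :: real
  assumes q: "q \<ge> 1" and y: "y > 0" and z0: "Im z0 > 0"
  shows "min_dist_R z0 q x y \<ge> ln (y / ((real q)^2 * ((x - real_of_int p / real q)^2 + y^2)))
            - ln (Im z0 / min 1 ((Im z0)^2)) - ln 2"
proof -
  define Y where "Y = y / ((real q)^2 * ((x - real_of_int p / real q)^2 + y^2))"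
  define H where "H = Im z0 / min 1 ((Im z0)^2)"
  have Yp: "Y > 0" unfolding Y_def using y q by (simp add: add_nonneg_pos)
  have ne: "R_reps q x y \<noteq> {}" unfolding R_reps_def by auto
  have SLne: "SL2Z \<noteq> {}" proof - have "(1,0,0,1) \<in> SL2Z" unfolding SL2Z_def by simp thus ?thesis by blast qed
  show ?thesis unfolding min_dist_R_def Y_def[symmetric] H_def[symmetric]
  proof (rule cINF_greatest[OF ne])
    fix z assume "z \<in> R_reps q x y"
    then obtain j where z: "z = Complex (x + real j / real q) y" unfolding R_reps_def by auto
    have Iz: "Im z > 0" using z y by simp
    obtain gam where gS: "gam \<in> SL2Z" and gh: "Im (moebius gam z) \<ge> Y"
      using cusp_height[OF q y, where x=x and j=j and p=p] unfolding Y_def z by blast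
    show "ln Y - ln H - ln 2 \<le> dist_M z0 z" unfolding dist_M_def
    proof (rule cINF_greatest[OF SLne])
      fix g assume g: "g \<in> SL2Z"
      have Igz: "Im (moebius g z0) > 0" using Im_moebius_pos[OF g z0] .
      have "dist_H (moebius g z0) z \<ge> ln (Im (moebius gam z)) - ln (Im (moebius gam (moebius g z0))) - ln 2"
        using dist_H_lower[OF gS Igz Iz] .
      moreover have "ln Y \<le> ln (Im (moebius gam z))" using gh Yp by simp
      moreover have "ln (Im (moebius gam (moebius g z0))) \<le> ln H"
        unfolding H_def using orbit_height_bound[OF gS g z0] Im_moebius_pos[OF gS Igz] by simp
      ultimately show "ln Y - ln H - ln 2 \<le> dist_H (moebius g z0) z" by linarith
    qed
  qed
qed

lemma Y_bound:
  fixes q y d k \<beta> c0 C :: real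
  assumes q: "q \<ge> 1" and y: "y > 0" and c0: "c0 > 0" and C: "C > 0"
    and dl: "\<bar>d\<bar> < q powr (- k - 1)"
    and yl: "c0 * q powr (- \<beta>) \<le> y" and yu: "y \<le> C * q powr (- \<beta>)"
  shows "min (1 / (2*C)) (c0 / 2) * q powr (min (\<beta> - 2) (2*k - \<beta>)) \<le> y / (q^2 * (d^2 + y^2))"
proof -
  define m where "m = min (\<beta> - 2) (2*k - \<beta>)"
  define K where "K = min (1 / (2*C)) (c0 / 2)"
  have qp: "q > 0" using q by simp
  have q2: "q^2 = q powr 2" using qp by (simp add: powr_numeral)
  have Kp: "K > 0" unfolding K_def using C c0 by simp
  have pm: "q powr m > 0" using qp by simp
  show ?thesis unfolding K_def[symmetric] m_def[symmetric]
  proof (cases "d^2 \<le> y^2")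
    case True
    have s1: "K * q powr m \<le> (1/(2*C)) * q powr (\<beta> - 2)"
    proof (rule mult_mono)
      show "K \<le> 1/(2*C)" unfolding K_def by simp
      show "q powr m \<le> q powr (\<beta> - 2)" unfolding m_def by (rule powr_mono) (use q in auto)
      show "0 \<le> 1/(2*C)" using C by simp
      show "0 \<le> q powr m" using pm by simp
    qed
    have e: "q powr (\<beta> - 2) * (q^2 * q powr (- \<beta>)) = 1"
    proof -
      have "q powr (\<beta> - 2) * (q powr 2 * q powr (- \<beta>)) = q powr ((\<beta> - 2) + (2 + - \<beta>))"
        by (simp only: powr_add)
      also have "\<dots> = 1" using qp by simp
      finally show ?thesis unfolding q2 .
    qed
    have s2: "(1/(2*C)) * q powr (\<beta> - 2) = 1 / (2 * q^2 * (C * q powr (- \<beta>)))"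
    proof -
      have Bp: "q^2 * q powr (- \<beta>) > 0" using qp by simp
      have "q powr (\<beta> - 2) = q powr (\<beta> - 2) * (q^2 * q powr (- \<beta>)) / (q^2 * q powr (- \<beta>))"
        using Bp by (intro nonzero_mult_div_cancel_right[symmetric]) linarith
      hence A: "q powr (\<beta> - 2) = 1 / (q^2 * q powr (- \<beta>))" unfolding e .
      have r: "2 * q^2 * (C * q powr (- \<beta>)) = (2 * C) * (q^2 * q powr (- \<beta>))" by (simp only: ac_simps)
      have gen: "\<And>a b::real. 1/a * (1/b) = 1/(a*b)" by simp
      show ?thesis unfolding A r by (rule gen)
    qed
    have s3: "1 / (2 * q^2 * (C * q powr (- \<beta>))) \<le> 1 / (2 * q^2 * y)"
    proof -
      have a: "0 < 2 * q^2 * y" using y qp by simp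
      have b: "2 * q^2 * y \<le> 2 * q^2 * (C * q powr (- \<beta>))" using yu qp by simp
      have c: "0 < 2 * q^2 * (C * q powr (- \<beta>))" using C qp by simp
      have P: "0 < (2 * q^2 * (C * q powr (- \<beta>))) * (2 * q^2 * y)" using c a by (rule mult_pos_pos)
      show ?thesis by (rule divide_left_mono[OF b _ P]) simp
    qed
    have s4: "1 / (2 * q^2 * y) = y / (q^2 * (2 * y^2))" using y qp by (simp add: field_simps power2_eq_square)
    have s5: "y / (q^2 * (2 * y^2)) \<le> y / (q^2 * (d^2 + y^2))"
    proof -
      have b: "q^2 * (d^2 + y^2) \<le> q^2 * (2 * y^2)" using True qp by simp
      have a: "0 < q^2 * (d^2 + y^2)" using y qp by (simp add: add_nonneg_pos)
      have c: "0 < q^2 * (2 * y^2)" using y qp by simp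
      show ?thesis by (rule divide_left_mono[OF b _ mult_pos_pos[OF c a]]) (use y in simp)
    qed
    show "K * q powr m \<le> y / (q^2 * (d^2 + y^2))" using s1 s2 s3 s4 s5 by linarith
  next
    case False
    have d2: "d^2 < q powr (-2*k - 2)"
    proof -
      have "d^2 = \<bar>d\<bar>^2" by simp
      also have "\<dots> < (q powr (- k - 1))^2" using dl by (intro power_strict_mono) auto
      also have "\<dots> = q powr ((- k - 1) + (- k - 1))" by (simp only: power2_eq_square powr_add)
      also have "(- k - 1) + (- k - 1) = -2*k - 2" by simp
      finally show ?thesis .
    qed
    have dp: "d^2 > 0" using False y by (smt (verit) zero_le_power2)
    have s1: "K * q powr m \<le> (c0/2) * q powr (2*k - \<beta>)"
    proof (rule mult_mono)
      show "K \<le> c0/2" unfolding K_def by simp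
      show "q powr m \<le> q powr (2*k - \<beta>)" unfolding m_def by (rule powr_mono) (use q in auto)
      show "0 \<le> c0/2" using c0 by simp
      show "0 \<le> q powr m" using pm by simp
    qed
    have e: "q powr (2*k - \<beta>) * (q^2 * q powr (-2*k - 2)) = q powr (- \<beta>)"
    proof -
      have "q powr (2*k - \<beta>) * (q powr 2 * q powr (-2*k - 2)) = q powr ((2*k - \<beta>) + (2 + (-2*k - 2)))"
        by (simp only: powr_add)
      also have "(2*k - \<beta>) + (2 + (-2*k - 2)) = - \<beta>" by simp
      finally show ?thesis unfolding q2 .
    qed
    have s2: "(c0/2) * q powr (2*k - \<beta>) = c0 * q powr (- \<beta>) / (q^2 * (2 * q powr (-2*k - 2)))"
    proof -
      have Bp: "q^2 * q powr (-2*k - 2) > 0" using qp by simp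
      have "q powr (2*k - \<beta>) = q powr (2*k - \<beta>) * (q^2 * q powr (-2*k - 2)) / (q^2 * q powr (-2*k - 2))"
        using Bp by (intro nonzero_mult_div_cancel_right[symmetric]) linarith
      hence A: "q powr (2*k - \<beta>) = q powr (- \<beta>) / (q^2 * q powr (-2*k - 2))" unfolding e .
      have r: "q^2 * (2 * q powr (-2*k - 2)) = 2 * (q^2 * q powr (-2*k - 2))" by (simp only: ac_simps)
      have gen: "\<And>c p b::real. c/2 * (p/b) = c*p/(2*b)" by simp
      show ?thesis unfolding A r by (rule gen)
    qed
    have s3: "c0 * q powr (- \<beta>) / (q^2 * (2 * q powr (-2*k - 2))) \<le> y / (q^2 * (2 * q powr (-2*k - 2)))"
      using yl qp by (intro divide_right_mono) auto
    have s4: "y / (q^2 * (2 * q powr (-2*k - 2))) \<le> y / (q^2 * (2 * d^2))"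
    proof -
      have b: "q^2 * (2 * d^2) \<le> q^2 * (2 * q powr (-2*k - 2))" using d2 qp by simp
      have c: "0 < q^2 * (2 * d^2)" using dp qp by simp
      have a: "0 < q^2 * (2 * q powr (-2*k - 2))" using qp by simp
      show ?thesis by (rule divide_left_mono[OF b _ mult_pos_pos[OF a c]]) (use y in simp)
    qed
    have s5: "y / (q^2 * (2 * d^2)) \<le> y / (q^2 * (d^2 + y^2))"
    proof -
      have b: "q^2 * (d^2 + y^2) \<le> q^2 * (2 * d^2)" using False qp by simp
      have a: "0 < q^2 * (d^2 + y^2)" using y qp by (simp add: add_nonneg_pos)
      have c: "0 < q^2 * (2 * d^2)" using dp qp by simp
      show ?thesis by (rule divide_left_mono[OF b _ mult_pos_pos[OF c a]]) (use y in simp)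
    qed
    show "K * q powr m \<le> y / (q^2 * (d^2 + y^2))" using s1 s2 s3 s4 s5 by linarith
  qed
qed

lemma approx_limsup:
  fixes z0 :: complex and x \<beta> k c0 C :: real and y :: "nat \<Rightarrow> real"
  assumes z0: "Im z0 > 0" and y_pos: "\<And>n. y n > 0" and c0: "c0 > 0" and C: "C > 0"
    and yb: "\<forall>n\<ge>1. c0 * real n powr (- \<beta>) \<le> y n \<and> y n \<le> C * real n powr (- \<beta>)"
    and pa: "primitive_approximable k x"
  shows "ereal (min (\<beta> - 2) (2*k - \<beta>)) \<le> limsup (\<lambda>n. ereal (min_dist_R z0 n x (y n) / ln (real n)))"
proof -
  define H where "H = Im z0 / min 1 ((Im z0)^2)"
  define K where "K = min (1 / (2*C)) (c0 / 2)"
  define m where "m = min (\<beta> - 2) (2*k - \<beta>)"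
  define D where "D = ln K - ln H - ln 2"
  define Q where "Q = {n :: nat. \<exists>p :: int. coprime p (int n) \<and>
                  \<bar>x - real_of_int p / real n\<bar> < real n powr (- k - 1)}"
  define f where "f = (\<lambda>n. ereal (min_dist_R z0 n x (y n) / ln (real n)))"
  have Qinf: "infinite Q" using pa unfolding primitive_approximable_def Q_def .
  have Kp: "K > 0" unfolding K_def using C c0 by simp
  have key: "min_dist_R z0 q x (y q) \<ge> m * ln (real q) + D" if qQ: "q \<in> Q" for q
  proof -
    obtain p :: int where pp: "\<bar>x - real_of_int p / real q\<bar> < real q powr (- k - 1)"
      using qQ unfolding Q_def by blast
    have q1: "q \<ge> 1"
    proof (rule ccontr)
      assume "\<not> q \<ge> 1" hence "q = 0" by simp
      with pp show False by simp
    qed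
    have rq: "real q \<ge> 1" using q1 by simp
    have ybq: "c0 * real q powr (- \<beta>) \<le> y q" "y q \<le> C * real q powr (- \<beta>)" using yb q1 by auto
    define Y where "Y = y q / ((real q)^2 * ((x - real_of_int p / real q)^2 + (y q)^2))"
    have YB: "K * real q powr m \<le> Y" unfolding K_def m_def Y_def
      by (rule Y_bound[OF rq y_pos c0 C pp ybq])
    have pos: "K * real q powr m > 0" using Kp rq by simp
    have "ln K + m * ln (real q) = ln (K * real q powr m)" using Kp rq by (simp add: ln_mult ln_powr)
    also have "\<dots> \<le> ln Y" using YB pos by simp
    finally have lY: "ln K + m * ln (real q) \<le> ln Y" .
    have "ln Y - ln H - ln 2 \<le> min_dist_R z0 q x (y q)"
      unfolding Y_def H_def by (rule min_dist_lower[OF q1 y_pos z0])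
    thus ?thesis using lY unfolding D_def by linarith
  qed
  have "ereal m \<le> limsup f + ereal e" if e: "e > 0" for e
  proof -
    define N where "N = nat \<lceil>exp (\<bar>D\<bar> / e)\<rceil> + 2"
    have "ereal (m - e) \<le> limsup f" unfolding limsup_INF_SUP
    proof (rule INF_greatest)
      fix n :: nat
      obtain q where qge: "q \<ge> max n N" and qQ: "q \<in> Q"
        using Qinf unfolding infinite_nat_iff_unbounded_le by blast
      have q2: "real q \<ge> 2" using qge unfolding N_def by simp
      have lnp: "ln (real q) > 0" using q2 by simp
      have "exp (\<bar>D\<bar> / e) \<le> real q"
      proof -
        have "exp (\<bar>D\<bar> / e) \<le> real (nat \<lceil>exp (\<bar>D\<bar> / e)\<rceil>)" by linarith
        also have "\<dots> \<le> real q"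
        proof -
          have "N \<le> q" using qge by simp
          hence "nat \<lceil>exp (\<bar>D\<bar> / e)\<rceil> \<le> q" unfolding N_def by linarith
          thus ?thesis by (simp only: of_nat_le_iff)
        qed
        finally show ?thesis .
      qed
      hence "ln (exp (\<bar>D\<bar> / e)) \<le> ln (real q)" by (intro ln_mono) auto
      hence "\<bar>D\<bar> / e \<le> ln (real q)" by (simp only: ln_exp)
      hence De: "\<bar>D\<bar> \<le> ln (real q) * e" by (simp only: pos_divide_le_eq[OF e])
      have dist: "(m - e) * ln (real q) = m * ln (real q) - ln (real q) * e" by (simp only: left_diff_distrib mult.commute)
      have "(m - e) * ln (real q) \<le> m * ln (real q) + D" unfolding dist using De by linarith
      also have "\<dots> \<le> min_dist_R z0 q x (y q)" using key[OF qQ] .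
      finally have "m - e \<le> min_dist_R z0 q x (y q) / ln (real q)" by (simp only: pos_le_divide_eq[OF lnp])
      hence "ereal (m - e) \<le> f q" unfolding f_def by simp
      thus "ereal (m - e) \<le> (SUP k\<in>{n..}. f k)" using qge by (intro SUP_upper2[of q]) auto
    qed
    thus ?thesis
    proof (cases "limsup f")
      case (real r)
      with \<open>ereal (m - e) \<le> limsup f\<close> show ?thesis by simp
    next
      case PInf thus ?thesis by simp
    next
      case MInf with \<open>ereal (m - e) \<le> limsup f\<close> show ?thesis by simp
    qed
  qed
  hence "ereal m \<le> limsup f" by (rule ereal_le_epsilon2)
  thus ?thesis unfolding m_def f_def .
qed


theorem theorem4p4:
  fixes z0 :: complex and x \<beta> :: real and y :: "nat \<Rightarrow> real"
  assumes z0: "z0 \<in> upper_half_plane"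
    and x_range: "0 \<le> x" "x < 1"
    and x_irrat: "x \<notin> \<rat>"
    and kappa_gt1: "dioph_exponent x > 1"
    and y_pos: "\<And>n. y n > 0"
    and y_asymp: "\<exists>c C. c > 0 \<and> C > 0 \<and>
        (\<forall>n\<ge>1. c * real n powr (- \<beta>) \<le> y n \<and> y n \<le> C * real n powr (- \<beta>))"
    and beta_low: "2 < \<beta>"
    and beta_high: "ereal \<beta> < 2 * dioph_exponent x"
  shows "limsup (\<lambda>n. ereal (min_dist_R z0 n x (y n) / ln (real n)))
           \<ge> min (2 * dioph_exponent x - ereal \<beta>) (ereal (\<beta> - 2))"
proof (rule ccontr)
  define L where "L = limsup (\<lambda>n. ereal (min_dist_R z0 n x (y n) / ln (real n)))"
  define S where "S = {\<kappa>. \<kappa> > 0 \<and> primitive_approximable \<kappa> x}"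
  define \<kappa> where "\<kappa> = dioph_exponent x"
  have kS: "\<kappa> = Sup (ereal ` S)" unfolding \<kappa>_def dioph_exponent_def S_def ..
  obtain c C where c: "c > 0" and C: "C > 0"
    and yb: "\<forall>n\<ge>1. c * real n powr (- \<beta>) \<le> y n \<and> y n \<le> C * real n powr (- \<beta>)"
    using y_asymp by blast
  have Iz: "Im z0 > 0" using z0 unfolding upper_half_plane_def by simp
  have bound: "ereal (min (\<beta> - 2) (2*k - \<beta>)) \<le> L" if "k \<in> S" for k
    unfolding L_def using that unfolding S_def
    by (intro approx_limsup[OF Iz y_pos c C yb]) auto
  assume "\<not> ?thesis"
  hence lt: "L < min (2 * \<kappa> - ereal \<beta>) (ereal (\<beta> - 2))" unfolding L_def \<kappa>_def by (simp only: not_le)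
  have "1 < Sup (ereal ` S)" using kappa_gt1 kS \<kappa>_def by simp
  then obtain k0' where "k0' \<in> ereal ` S" "1 < k0'" by (subst (asm) less_Sup_iff) blast
  then obtain k0 where "k0 \<in> S" by (elim imageE) simp
  hence Lgt: "ereal (min (\<beta> - 2) (2*k0 - \<beta>)) \<le> L" by (rule bound)
  have Lb: "L < ereal (\<beta> - 2)" using lt by simp
  obtain l where l: "L = ereal l"
  proof (cases L)
    case (real r) thus ?thesis using that by blast
  next
    case PInf thus ?thesis using Lb by simp
  next
    case MInf thus ?thesis using Lgt by (simp add: min_def split: if_splits)
  qed
  have l1: "l < \<beta> - 2" using Lb l by simp
  have l2: "ereal l < 2 * \<kappa> - ereal \<beta>" using lt l by simp
  have "ereal ((l + \<beta>) / 2) < \<kappa>"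
  proof (cases \<kappa>)
    case (real t)
    with l2 have "l < 2 * t - \<beta>" by simp
    thus ?thesis using real by simp
  next
    case PInf thus ?thesis by simp
  next
    case MInf thus ?thesis using kappa_gt1 \<kappa>_def by simp
  qed
  then obtain k where kS': "k \<in> S" and kk: "ereal ((l + \<beta>) / 2) < ereal k"
    unfolding kS less_Sup_iff by blast
  have "l < min (\<beta> - 2) (2*k - \<beta>)" using kk l1 by simp
  moreover have "min (\<beta> - 2) (2*k - \<beta>) \<le> l" using bound[OF kS'] unfolding l by (simp only: ereal_less_eq(3))
  ultimately show False by linarith
qed

end
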